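(* If $S$ is a cyclotomic numerical semigroup, then $S$ is symmetric.
   Context: A numerical semigroup is a submonoid $S$ of $(\mathbb N,+)$ with $\mathbb N\setminus S$ finite; its Frobenius number $\mathrm F(S)$ is the largest integer not in $S$. $S$ is symmetric if $S\cup(\mathrm F(S)-S)=\mathbb Z$, where $\mathrm F(S)-S=\{\mathrm F(S)-s: s\in S\}$. The semigroup polynomial is $\mathrm P_S(x)=(1-x)\sum_{s\in S}x^s$, and $S$ is cyclotomic if $\mathrm P_S$ (a monic integer polynomial) has all its complex roots in the closed unit disc. *)

theory Defs
  imports "HOL-Analysis.Analysis" "HOL-Computational_Algebra.Computational_Algebra"
begin

definition numerical_semigroup :: "nat set \<Rightarrow> bool" where
  "numerical_semigroup S \<longleftrightarrow> 0 \<in> S \<and> (\<forall>a\<in>S. \<forall>b\<in>S. a + b \<in> S) \<and> finite (UNIV - S)"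

definition frobenius :: "nat set \<Rightarrow> int" where
  "frobenius S = Max ({-1} \<union> int ` (UNIV - S))"

definition symmetric_ns :: "nat set \<Rightarrow> bool" where
  "symmetric_ns S \<longleftrightarrow> int ` S \<union> (\<lambda>s. frobenius S - int s) ` S = (UNIV :: int set)"

definition semigroup_poly :: "nat set \<Rightarrow> int poly" where
  "semigroup_poly S = (THE p. fps_of_poly p = (1 - fps_X) * Abs_fps (\<lambda>n. if n \<in> S then 1 else 0))"

definition cyclotomic_ns :: "nat set \<Rightarrow> bool" where
  "cyclotomic_ns S \<longleftrightarrow>
     (\<forall>z::complex. poly (map_poly of_int (semigroup_poly S)) z = 0 \<longrightarrow> norm z \<le> 1)"

end

theory Submission imports Defs begin

lemma reflect_eq:
  fixes Q :: "complex poly"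
  assumes lc: "lead_coeff Q = 1" and c0: "coeff Q 0 = 1"
    and roots: "\<And>z. poly Q z = 0 \<Longrightarrow> norm z \<le> 1"
    and real: "map_poly cnj Q = Q"
  shows "reflect_poly Q = Q"
proof -
  obtain r where r: "smult (lead_coeff Q) (\<Prod>i<degree Q. [:-r i, 1:]) = Q"
    by (rule complex_poly_decompose')
  define n where "n = degree Q"
  have Qeq: "Q = (\<Prod>i<n. [:-r i, 1:])" using r lc n_def by simp
  have pQ: "poly Q x = (\<Prod>i<n. x - r i)" for x by (subst Qeq) (simp add: poly_prod)
  have rootr: "poly Q (r i) = 0" if "i < n" for i
    unfolding pQ using that by (auto simp: prod_zero_iff)
  have le1: "norm (r i) \<le> 1" if "i<n" for i using roots rootr that by blast
  have P0: "(\<Prod>i<n. - r i) = 1" using pQ[of 0] c0 poly_0_coeff_0[of Q] by simp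
  have "(\<Prod>i<n. norm (- r i)) = 1" by (simp only: prod_norm P0) simp
  then have prodnorm: "(\<Prod>i<n. norm (r i)) = 1" by simp
  have eq1: "norm (r i) = 1" if "i<n" for i
  proof (rule ccontr)
    assume "norm (r i) \<noteq> 1" then have lt: "norm (r i) < 1" using le1 that by fastforce
    have "(\<Prod>j<n. norm (r j)) = norm (r i) * (\<Prod>j\<in>{..<n}-{i}. norm (r j))"
      using that by (simp add: prod.remove)
    also have "\<dots> \<le> norm (r i) * 1" by (intro mult_left_mono prod_le_1) (auto simp: le1)
    finally show False using prodnorm lt by simp
  qed
  have cnjr: "r i * cnj (r i) = 1" if "i<n" for i
    using complex_norm_square[of "r i"] eq1[OF that] by simp
  have "poly (reflect_poly Q) x = poly Q x" for x
  proof -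
    have rr: "reflect_poly [:-a,1:] = [:1,-a:]" for a :: complex
      by (rule poly_eqI) (auto simp: coeff_reflect_poly coeff_pCons split: nat.split)
    have "reflect_poly Q = (\<Prod>i<n. [:1, -r i:])" by (subst Qeq) (simp add: reflect_poly_prod rr)
    then have "poly (reflect_poly Q) x = (\<Prod>i<n. 1 - r i * x)" by (simp add: poly_prod mult.commute)
    also have "\<dots> = (\<Prod>i<n. (- r i) * (x - cnj (r i)))"
    proof (rule prod.cong)
      fix i assume "i \<in> {..<n}"
      then have "r i * cnj (r i) = 1" using cnjr by simp
      then show "1 - r i * x = (- r i) * (x - cnj (r i))" by (simp add: algebra_simps)
    qed simp
    also have "\<dots> = (\<Prod>i<n. - r i) * (\<Prod>i<n. x - cnj (r i))" by (rule prod.distrib)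
    also have "(\<Prod>i<n. x - cnj (r i)) = cnj (\<Prod>i<n. cnj x - r i)" by simp
    also have "\<dots> = cnj (poly Q (cnj x))" by (simp add: pQ)
    also have "\<dots> = poly (map_poly cnj Q) x" by simp
    finally show ?thesis using P0 real by simp
  qed
  then show ?thesis using poly_eq_poly_eq_iff by blast
qed


lemma above_max_in:
  assumes ns: "numerical_semigroup S" and "k > Max (UNIV - S)"
  shows "k \<in> S"
proof (rule ccontr)
  assume "k \<notin> S"
  have "finite (UNIV - S)" using ns by (simp add: numerical_semigroup_def)
  then have "k \<le> Max (UNIV - S)" using \<open>k \<notin> S\<close> by (intro Max_ge) auto
  then show False using assms by simp
qed

lemma semigroup_poly_coeff:
  assumes ns: "numerical_semigroup S" and ne: "UNIV - S \<noteq> {}"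
  defines "m \<equiv> Max (UNIV - S)"
  defines "c \<equiv> (\<lambda>k. (if k \<in> S then 1 else 0) - (if k \<noteq> 0 \<and> k - 1 \<in> S then 1 else 0) :: int)"
  shows "coeff (semigroup_poly S) = c" "degree (semigroup_poly S) = m + 1"
proof -
  have fin: "finite (UNIV - S)" using ns by (simp add: numerical_semigroup_def)
  have mH: "m \<notin> S" using Max_in[OF fin ne] m_def by auto
  have big: "k \<in> S" if "k > m" for k using above_max_in[OF ns] that m_def by simp
  have c0: "c k = 0" if "k \<ge> m + 2" for k using big[of k] big[of "k-1"] that unfolding c_def by auto
  define P where "P = Poly (map c [0..<m+2])"
  have cP: "coeff P = c"
  proof
    fix k show "coeff P k = c k"
      by (cases "k < m + 2") (auto simp: P_def nth_default_def c0 simp del: upt_Suc)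
  qed
  have fP: "fps_of_poly P = (1 - fps_X) * Abs_fps (\<lambda>n. if n \<in> S then 1 else 0)"
  proof (rule fps_ext)
    fix n
    show "fps_of_poly P $ n = ((1 - fps_X) * Abs_fps (\<lambda>n. if n \<in> S then 1 else 0)) $ n"
      by (simp add: left_diff_distrib cP c_def)
  qed
  have "semigroup_poly S = P" unfolding semigroup_poly_def
    proof (rule the_equality)
    show "fps_of_poly P = (1 - fps_X) * Abs_fps (\<lambda>n. if n \<in> S then 1 else 0)" by (rule fP)
  next
    fix p :: "int poly" assume "fps_of_poly p = (1 - fps_X) * Abs_fps (\<lambda>n. if n \<in> S then 1 else 0)"
    then have "fps_of_poly p = fps_of_poly P" using fP by simp
    then show "p = P" by (simp only: fps_of_poly_eq_iff)
  qed
  then show 1: "coeff (semigroup_poly S) = c" using cP by simp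
  have "c (m+1) = 1" using big[of "m+1"] mH unfolding c_def by simp
  moreover have "\<forall>i>m+1. c i = 0" using c0 by auto
  ultimately show "degree (semigroup_poly S) = m + 1" using 1
  proof -
    assume a: "c (m+1) = 1" "\<forall>i>m+1. c i = 0" "coeff (semigroup_poly S) = c"
    have "degree (semigroup_poly S) \<le> m + 1" using a by (intro degree_le) simp
    moreover have "m + 1 \<le> degree (semigroup_poly S)" using a by (intro le_degree) simp
    ultimately show ?thesis by simp
  qed
qed

theorem theorem1:
  fixes S :: "nat set"
  assumes "numerical_semigroup S" and "cyclotomic_ns S"
  shows "symmetric_ns S"
proof (cases "UNIV - S = {}")
  case True
  then have SU: "S = UNIV" by auto
  have F: "frobenius S = -1" unfolding frobenius_def True by simp
  show ?thesis unfolding symmetric_ns_def F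
  proof (intro set_eqI iffI)
    fix z :: int
    show "z \<in> int ` S \<union> (\<lambda>s. - 1 - int s) ` S"
    proof (cases "z \<ge> 0")
      case True
      then have "z = int (nat z)" by simp
      then show ?thesis using SU by blast
    next
      case False
      then have "z = -1 - int (nat (-1 - z))" by simp
      then show ?thesis using SU by blast
    qed
  qed simp
next
  case ne: False
  note ns = assms(1)
  define m where "m = Max (UNIV - S)"
  define c where "c = (\<lambda>k. (if k \<in> S then 1 else 0) - (if k \<noteq> 0 \<and> k - 1 \<in> S then 1 else 0) :: int)"
  have cP: "coeff (semigroup_poly S) = c" and dP: "degree (semigroup_poly S) = m + 1"
    using semigroup_poly_coeff[OF ns ne] unfolding m_def c_def by auto
  have fin: "finite (UNIV - S)" using ns by (simp add: numerical_semigroup_def)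
  have mH: "m \<notin> S" using Max_in[OF fin ne] m_def by auto
  have big: "k \<in> S" if "k > m" for k using above_max_in[OF ns] that m_def by simp
  have S0: "0 \<in> S" using ns by (simp add: numerical_semigroup_def)
  define Q :: "complex poly" where "Q = map_poly of_int (semigroup_poly S)"
  have cQ: "coeff Q k = of_int (c k)" for k unfolding Q_def by (simp add: coeff_map_poly cP)
  have dQ: "degree Q = m + 1" unfolding Q_def by (subst degree_map_poly) (auto simp: dP)
  have "c (m+1) = 1" using big[of "m+1"] mH unfolding c_def by simp
  then have lc: "lead_coeff Q = 1" using cQ dQ by simp
  have c0: "coeff Q 0 = 1" using cQ S0 unfolding c_def by simp
  have rt: "\<And>z. poly Q z = 0 \<Longrightarrow> norm z \<le> 1" using assms(2) unfolding cyclotomic_ns_def Q_def by blast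
  have re: "map_poly cnj Q = Q" by (rule poly_eqI) (simp add: coeff_map_poly cQ)
  have RQ: "reflect_poly Q = Q" using reflect_eq[OF lc c0 rt re] .
  have pal: "c k = c (m + 1 - k)" if "k \<le> m + 1" for k
  proof -
    have "coeff (reflect_poly Q) k = coeff Q k" using RQ by simp
    then have "of_int (c (m + 1 - k)) = (of_int (c k) :: complex)" using that by (simp add: coeff_reflect_poly dQ cQ)
    then show ?thesis by (simp only: of_int_eq_iff)
  qed
  have key: "k \<le> m \<Longrightarrow> (k \<in> S \<longleftrightarrow> m - k \<notin> S)" for k
  proof (induction k)
    case 0 then show ?case using S0 mH by simp
  next
    case (Suc k)
    then have IH: "k \<in> S \<longleftrightarrow> m - k \<notin> S" by simp
    have "c (Suc k) = c (m - k)" using pal[of "Suc k"] Suc.prems by simp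
    moreover have "m - k - 1 = m - Suc k" by simp
    moreover have "m - k \<noteq> 0" using Suc.prems by simp
    ultimately show ?case using IH unfolding c_def by (auto split: if_splits)
  qed
  have F: "frobenius S = int m" unfolding frobenius_def
  proof (rule Max_eqI)
    show "finite ({- 1} \<union> int ` (UNIV - S))" using fin by simp
    show "int m \<in> {- 1} \<union> int ` (UNIV - S)" using mH by simp
    fix y assume "y \<in> {- 1} \<union> int ` (UNIV - S)"
    then show "y \<le> int m" using big by (auto simp: not_less[symmetric])
  qed
  show ?thesis unfolding symmetric_ns_def F
  proof (intro set_eqI iffI)
    fix z :: int
    show "z \<in> int ` S \<union> (\<lambda>s. int m - int s) ` S"
    proof (cases "z < 0")
      case True
      then have "z = int m - int (nat (int m - z))" "nat (int m - z) > m" by auto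
      then show ?thesis using big by blast
    next
      case False
      then have zz: "z = int (nat z)" by simp
      show ?thesis
      proof (cases "nat z > m")
        case True then show ?thesis using big zz by blast
      next
        case False
        then have "nat z \<in> S \<or> m - nat z \<in> S" using key[of "nat z"] by auto
        moreover have "z = int m - int (m - nat z)" using False zz by linarith
        ultimately show ?thesis using zz by blast
      qed
    qed
  qed simp
qed

end
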